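(* For $d\in\{0,1\}$, every integer $n\ge3$ and every $j$ with $2\le j\le n-1$, \[ b_{n,d}(1,j)+b_{n,d}(j,1)=2\,p_{n,d}(1,j). \]
   Context: For a permutation $\pi=\pi_1\cdots\pi_n$ of $[n]$ (one-line notation), an ascent is a position $t$ with $\pi_t<\pi_{t+1}$ and a descent one with $\pi_t>\pi_{t+1}$; the height of a word is its number of ascents minus its number of descents. $\pi$ is a ballot permutation if every prefix $\pi_1\cdots\pi_t$ has nonnegative height. $b_{n,d}(i,j)$ is the number of ballot permutations of $[n]$ with exactly $d$ descents that contain $i\,n\,j$ as a factor ($\pi_t=i,\pi_{t+1}=n,\pi_{t+2}=j$ for some $t$). A cycle $(c_1\cdots c_k)$ means $c_1\mapsto c_2\mapsto\cdots\mapsto c_k\mapsto c_1$; $\operatorname{cdes}(c)=\lvert\{t\in[k]:c_t>c_{t+1}\}\rvert$, $\operatorname{casc}(c)=\lvert\{t\in[k]:c_t<c_{t+1}\}\rvert$ with $c_{k+1}=c_1$; the cyclic weight of a cycle is $\min(\operatorname{cdes}(c),\operatorname{casc}(c))$ and that of a permutation is the sum over its cycles. An odd order permutation has all cycles of odd length. $p_{n,d}(i,j)$ is the number of odd order permutations $\pi$ of $[n]$ with cyclic weight $d$ such that $\pi(i)=n$ and $\pi(n)=j$ (i.e. containing $i\,n\,j$ as a cyclic factor). *)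

theory Defs
  imports "HOL-Combinatorics.Permutations"
begin

definition asc_count :: "nat list \<Rightarrow> nat" where
  "asc_count ws = card {t. Suc t < length ws \<and> ws ! t < ws ! Suc t}"

definition des_count :: "nat list \<Rightarrow> nat" where
  "des_count ws = card {t. Suc t < length ws \<and> ws ! t > ws ! Suc t}"

definition height :: "nat list \<Rightarrow> int" where
  "height ws = int (asc_count ws) - int (des_count ws)"

definition is_perm_word :: "nat \<Rightarrow> nat list \<Rightarrow> bool" where
  "is_perm_word n ws \<longleftrightarrow> distinct ws \<and> set ws = {1..n}"

definition ballot :: "nat list \<Rightarrow> bool" where
  "ballot ws \<longleftrightarrow> (\<forall>t \<le> length ws. height (take t ws) \<ge> 0)"

definition has_factor3 :: "nat list \<Rightarrow> nat \<Rightarrow> nat \<Rightarrow> nat \<Rightarrow> bool" where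
  "has_factor3 ws a b c \<longleftrightarrow>
     (\<exists>t. t + 2 < length ws \<and> ws ! t = a \<and> ws ! (t + 1) = b \<and> ws ! (t + 2) = c)"

definition b_count :: "nat \<Rightarrow> nat \<Rightarrow> nat \<Rightarrow> nat \<Rightarrow> nat" where
  "b_count n d i j = card {ws. is_perm_word n ws \<and> ballot ws \<and> des_count ws = d
                               \<and> has_factor3 ws i n j}"

definition cycle_of :: "(nat \<Rightarrow> nat) \<Rightarrow> nat \<Rightarrow> nat set" where
  "cycle_of \<pi> x = {(\<pi> ^^ k) x | k. True}"

definition cycles_of :: "nat \<Rightarrow> (nat \<Rightarrow> nat) \<Rightarrow> nat set set" where
  "cycles_of n \<pi> = cycle_of \<pi> ` {1..n}"

text \<open>cdes / casc of a cycle (c_1 ... c_k): number of cyclic positions with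
  c_t > c_{t+1} resp. c_t < c_{t+1}, where c_{t+1} = \<pi> c_t.\<close>
definition cdes :: "(nat \<Rightarrow> nat) \<Rightarrow> nat set \<Rightarrow> nat" where
  "cdes \<pi> C = card {c \<in> C. c > \<pi> c}"

definition casc :: "(nat \<Rightarrow> nat) \<Rightarrow> nat set \<Rightarrow> nat" where
  "casc \<pi> C = card {c \<in> C. c < \<pi> c}"

definition cyclic_weight :: "nat \<Rightarrow> (nat \<Rightarrow> nat) \<Rightarrow> nat" where
  "cyclic_weight n \<pi> = (\<Sum>C \<in> cycles_of n \<pi>. min (cdes \<pi> C) (casc \<pi> C))"

definition odd_order :: "nat \<Rightarrow> (nat \<Rightarrow> nat) \<Rightarrow> bool" where
  "odd_order n \<pi> \<longleftrightarrow> (\<forall>C \<in> cycles_of n \<pi>. odd (card C))"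

definition p_count :: "nat \<Rightarrow> nat \<Rightarrow> nat \<Rightarrow> nat \<Rightarrow> nat" where
  "p_count n d i j = card {\<pi>. \<pi> permutes {1..n} \<and> odd_order n \<pi> \<and> cyclic_weight n \<pi> = d
                              \<and> \<pi> i = n \<and> \<pi> n = j}"

end

theory Submission
  imports Defs "HOL-Combinatorics.Cycles"
begin


definition descs :: "nat list \<Rightarrow> nat set" where
  "descs ws = {t. Suc t < length ws \<and> ws ! t > ws ! Suc t}"

lemma des_count_descs: "des_count ws = card (descs ws)"
  by (simp add: des_count_def descs_def)

lemma finite_descs: "finite (descs ws)"
  by (rule finite_subset[of _ "{..<length ws}"]) (auto simp: descs_def)

lemma strict_sl: "sorted_wrt (<) xs \<Longrightarrow> sorted_list_of_set (set xs) = xs"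
  by (simp add: strict_sorted_iff sorted_list_of_set.idem_if_sorted_distinct)

lemma ballot_one:
  assumes d: "distinct ws" and k: "descs ws \<subseteq> {k}" and k1: "k \<ge> 1"
  shows "ballot ws"
  unfolding ballot_def
proof (intro allI impI)
  fix t assume t: "t \<le> length ws"
  let ?w = "take t ws"
  have ds: "{s. Suc s < length ?w \<and> ?w ! s > ?w ! Suc s} \<subseteq> {k}"
  proof
    fix s assume "s \<in> {s. Suc s < length ?w \<and> ?w ! s > ?w ! Suc s}"
    hence "s \<in> descs ws" using t by (auto simp: descs_def)
    thus "s \<in> {k}" using k by blast
  qed
  hence dc: "des_count ?w \<le> 1" unfolding des_count_def
    using card_mono[OF _ ds] by simp
  show "height ?w \<ge> 0"
  proof (cases "des_count ?w = 0")
    case True thus ?thesis by (simp add: height_def)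
  next
    case False
    hence "{s. Suc s < length ?w \<and> ?w ! s > ?w ! Suc s} \<noteq> {}" unfolding des_count_def by (metis card.empty)
    with ds have "k \<in> {s. Suc s < length ?w \<and> ?w ! s > ?w ! Suc s}" by blast
    hence kt: "Suc k < t" using t by auto
    have "ws \<noteq> []" using kt t by auto
    hence "ws ! 0 \<noteq> ws ! 1" using kt t nth_eq_iff_index_eq[OF d, of 0 1] by simp
    moreover have "0 \<notin> descs ws" using k k1 by auto
    ultimately have "ws ! 0 < ws ! 1" using kt t by (auto simp: descs_def)
    hence "0 \<in> {s. Suc s < length ?w \<and> ?w ! s < ?w ! Suc s}" using kt t k1 by auto
    moreover have "finite {s. Suc s < length ?w \<and> ?w ! s < ?w ! Suc s}"
      by (rule finite_subset[of _ "{..<length ?w}"]) auto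
    ultimately have "card {s. Suc s < length ?w \<and> ?w ! s < ?w ! Suc s} > 0"
      by (subst card_gt_0_iff) blast
    hence "asc_count ?w \<ge> 1" unfolding asc_count_def by simp
    with dc show ?thesis by (simp add: height_def)
  qed
qed

lemma sorted_parts:
  assumes d: "distinct ws" and k: "descs ws \<subseteq> {k}"
  shows "sorted_wrt (<) (take (Suc k) ws)" "sorted_wrt (<) (drop (Suc k) ws)"
proof -
  have asc: "ws ! s < ws ! Suc s" if "Suc s < length ws" "s \<noteq> k" for s
  proof -
    have "ws ! s \<noteq> ws ! Suc s" using d that by (simp add: nth_eq_iff_index_eq)
    moreover have "s \<notin> descs ws" using k that by auto
    ultimately show ?thesis using that by (auto simp: descs_def)
  qed
  have "\<forall>i. Suc i < length (take (Suc k) ws) \<longrightarrow> take (Suc k) ws ! i < take (Suc k) ws ! Suc i"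
  proof (intro allI impI)
    fix i assume i: "Suc i < length (take (Suc k) ws)"
    hence "ws ! i < ws ! Suc i" by (intro asc) auto
    thus "take (Suc k) ws ! i < take (Suc k) ws ! Suc i" using i by simp
  qed
  thus "sorted_wrt (<) (take (Suc k) ws)" by (simp add: sorted_wrt_iff_nth_Suc_transp)
  have "\<forall>i. Suc i < length (drop (Suc k) ws) \<longrightarrow> drop (Suc k) ws ! i < drop (Suc k) ws ! Suc i"
  proof (intro allI impI)
    fix i assume "Suc i < length (drop (Suc k) ws)"
    hence "ws ! (Suc k + i) < ws ! Suc (Suc k + i)" by (intro asc) auto
    thus "drop (Suc k) ws ! i < drop (Suc k) ws ! Suc i" using \<open>Suc i < _\<close> by simp
  qed
  thus "sorted_wrt (<) (drop (Suc k) ws)" by (simp add: sorted_wrt_iff_nth_Suc_transp)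
qed

lemma descs_append:
  assumes P: "sorted_wrt (<) P" and Q: "sorted_wrt (<) Q" and ne: "P \<noteq> []" "Q \<noteq> []"
    and lh: "last P > hd Q"
  shows "descs (P @ Q) = {length P - 1}"
proof -
  have "t \<in> descs (P @ Q) \<longleftrightarrow> t = length P - 1" for t
  proof (cases "Suc t < length P")
    case True
    have "P ! t < P ! Suc t" by (rule sorted_wrt_nth_less[OF P]) (use True in auto)
    moreover have "(P @ Q) ! t = P ! t" "(P @ Q) ! Suc t = P ! Suc t" using True by (auto simp: nth_append)
    ultimately show ?thesis using True unfolding descs_def by auto
  next
    case False
    show ?thesis
    proof (cases "t = length P - 1")
      case True
      have "(P @ Q) ! t = last P" using True ne by (simp add: nth_append last_conv_nth)
      moreover have "(P @ Q) ! Suc t = hd Q" using True ne by (simp add: nth_append hd_conv_nth)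
      moreover have "Suc t < length (P @ Q)" using True ne by (cases Q) auto
      ultimately show ?thesis using True lh unfolding descs_def by auto
    next
      case F2: False
      then have tP: "t \<ge> length P" using False by auto
      show ?thesis
      proof (cases "Suc t < length (P @ Q)")
        case True
        have "Q ! (t - length P) < Q ! Suc (t - length P)"
          by (rule sorted_wrt_nth_less[OF Q]) (use True tP in auto)
        moreover have "(P @ Q) ! t = Q ! (t - length P)" using tP by (simp add: nth_append)
        moreover have "(P @ Q) ! Suc t = Q ! Suc (t - length P)" using tP
          by (simp add: nth_append Suc_diff_le)
        ultimately show ?thesis using F2 unfolding descs_def by simp
      next
        case False
        then show ?thesis using F2 unfolding descs_def by simp
      qed
    qed
  qed
  thus ?thesis by auto
qed



lemma split3:
  assumes "Suc (Suc t) < length ws"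
  shows "ws = take t ws @ [ws ! t, ws ! Suc t, ws ! Suc (Suc t)] @ drop (Suc (Suc (Suc t))) ws"
proof -
  have "drop t ws = ws ! t # ws ! Suc t # ws ! Suc (Suc t) # drop (Suc (Suc (Suc t))) ws"
    using assms by (simp add: Cons_nth_drop_Suc)
  thus ?thesis by (metis append_Cons append_Nil append_take_drop_id)
qed

lemma factor_descs:
  assumes "des_count ws = 1" "Suc (Suc t) < length ws" "ws ! Suc t > ws ! Suc (Suc t)"
  shows "descs ws = {Suc t}"
proof -
  have "Suc t \<in> descs ws" using assms by (auto simp: descs_def)
  moreover have "card (descs ws) = 1" using assms des_count_descs by simp
  ultimately show ?thesis by (metis card_1_singletonE singletonD)
qed

lemma b_count_zero:
  assumes "c < n"
  shows "b_count n 0 a c = 0"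
proof -
  have E: "{ws. is_perm_word n ws \<and> ballot ws \<and> des_count ws = 0 \<and> has_factor3 ws a n c} = {}"
  proof (rule ccontr)
    assume "\<not> ?thesis"
    then obtain ws t where "des_count ws = 0" "Suc (Suc t) < length ws" "ws ! Suc t = n" "ws ! Suc (Suc t) = c"
      unfolding has_factor3_def by auto
    hence "Suc t \<in> descs ws" "des_count ws = 0" using assms by (auto simp: descs_def)
    thus False using finite_descs[of ws] by (simp add: des_count_descs)
  qed
  show ?thesis unfolding b_count_def E by simp
qed

lemma perm_word_ge1: "is_perm_word n ws \<Longrightarrow> i < length ws \<Longrightarrow> ws ! i \<ge> 1 \<and> ws ! i \<le> n"
  unfolding is_perm_word_def by (metis atLeastAtMost_iff nth_mem)

lemma b_count_1j:
  assumes n: "n \<ge> 3" and j: "2 \<le> j" "j \<le> n - 1"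
  shows "b_count n 1 1 j = (if j = 2 then 1 else 0)"
proof -
  let ?W = "{ws. is_perm_word n ws \<and> ballot ws \<and> des_count ws = 1 \<and> has_factor3 ws 1 n j}"
  let ?w0 = "[1, n] @ [2..<n]"
  have sub: "ws = ?w0 \<and> j = 2" if ws: "ws \<in> ?W" for ws
  proof -
    from ws obtain t where t: "Suc (Suc t) < length ws" "ws ! t = 1" "ws ! Suc t = n" "ws ! Suc (Suc t) = j"
      and pw: "is_perm_word n ws" and dc: "des_count ws = 1"
      unfolding has_factor3_def by auto
    have dist: "distinct ws" and st: "set ws = {1..n}" using pw by (auto simp: is_perm_word_def)
    have D: "descs ws = {Suc t}" using factor_descs[OF dc t(1)] t j by simp
    have s1: "sorted_wrt (<) (take (Suc (Suc t)) ws)" using sorted_parts(1)[OF dist] D by simp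
    have s2: "sorted_wrt (<) (drop (Suc (Suc t)) ws)" using sorted_parts(2)[OF dist] D by simp
    have t0: "t = 0"
    proof (rule ccontr)
      assume "t \<noteq> 0"
      hence "take (Suc (Suc t)) ws ! (t - 1) < take (Suc (Suc t)) ws ! t"
        using t(1) by (intro sorted_wrt_nth_less[OF s1]) auto
      hence "ws ! (t - 1) < 1" using t by simp
      moreover have "ws ! (t - 1) \<ge> 1" using perm_word_ge1[OF pw, of "t - 1"] t(1) by simp
      ultimately show False by simp
    qed
    have ws_eq: "ws = [1, n] @ drop 2 ws"
      using split3[OF t(1)] t t0 by (metis Cons_nth_drop_Suc One_nat_def Suc_1 Suc_lessD append_Cons append_Nil drop0)
    have "set (drop 2 ws) = {2..<n}"
    proof -
      have "set ws = {1, n} \<union> set (drop 2 ws)" using ws_eq by (metis empty_set list.simps(15) set_append)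
      moreover have "1 \<notin> set (drop 2 ws)" "n \<notin> set (drop 2 ws)" using dist ws_eq
        by (metis append_Cons append_Nil distinct.simps(2) list.set_intros(1,2))+
      ultimately have "set (drop 2 ws) = {1..n} - {1, n}" using st by auto
      also have "\<dots> = {2..<n}" by auto
      finally show ?thesis .
    qed
    hence d2: "drop 2 ws = [2..<n]" using strict_sl[OF s2] t0 by (simp add: numeral_2_eq_2)
    have "j = ws ! 2" using t t0 by (simp add: numeral_2_eq_2)
    also have "\<dots> = [2..<n] ! 0" using ws_eq d2 by (metis append.simps(1,2) nth_Cons_0 nth_Cons_Suc numeral_2_eq_2 One_nat_def)
    also have "\<dots> = 2" using n by simp
    finally show ?thesis using ws_eq d2 by simp
  qed
  have mem: "?w0 \<in> ?W" if "j = 2"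
  proof -
    have pw: "is_perm_word n ?w0" using n by (auto simp: is_perm_word_def)
    have D: "descs ?w0 = {1}" using n by (subst descs_append) auto
    have "ballot ?w0" using pw D by (intro ballot_one[of _ 1]) (auto simp: is_perm_word_def)
    moreover have "des_count ?w0 = 1" using D by (simp add: des_count_descs)
    moreover have "has_factor3 ?w0 1 n j" unfolding has_factor3_def using n that
      by (intro exI[of _ 0]) (simp add: numeral_2_eq_2 upt_rec)
    ultimately show ?thesis using pw by simp
  qed
  show ?thesis
  proof (cases "j = 2")
    case True
    hence E: "?W = {?w0}" using sub mem by blast
    show ?thesis using True unfolding b_count_def E by simp
  next
    case False
    hence E: "?W = {}" using sub by blast
    show ?thesis using False unfolding b_count_def E by simp
  qed
qed



definition hw :: "nat \<Rightarrow> nat \<Rightarrow> nat set \<Rightarrow> nat list" where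
  "hw n j S = sorted_list_of_set S @ [j, n] @ 1 # sorted_list_of_set ({2..<n} - insert j S)"

lemma b_count_j1:
  assumes n: "n \<ge> 3" and j: "2 \<le> j" "j \<le> n - 1"
  shows "b_count n 1 j 1 = 2 ^ (j - 2)"
proof -
  let ?W = "{ws. is_perm_word n ws \<and> ballot ws \<and> des_count ws = 1 \<and> has_factor3 ws j n 1}"
  have inj: "inj_on (hw n j) (Pow {2..<j})"
  proof (rule inj_onI)
    fix S1 S2 assume S: "S1 \<in> Pow {2..<j}" "S2 \<in> Pow {2..<j}" and e: "hw n j S1 = hw n j S2"
    have tw: "takeWhile (\<lambda>x. x \<noteq> j) (hw n j S) = sorted_list_of_set S" if "S \<in> Pow {2..<j}" for S
    proof -
      have "finite S" using that by (auto intro: finite_subset)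
      moreover have "\<forall>x\<in>S. x \<noteq> j" using that by auto
      ultimately have "\<forall>x\<in>set (sorted_list_of_set S). x \<noteq> j" by simp
      thus ?thesis unfolding hw_def by (subst takeWhile_append) simp
    qed
    have "sorted_list_of_set S1 = sorted_list_of_set S2" using tw[OF S(1)] tw[OF S(2)] e by simp
    moreover have "finite S1" "finite S2" using S by (auto intro: finite_subset)
    ultimately show "S1 = S2" by (metis sorted_list_of_set.set_sorted_key_list_of_set)
  qed
  have mem: "hw n j S \<in> ?W" if S: "S \<subseteq> {2..<j}" for S
  proof -
    let ?R = "{2..<n} - insert j S"
    have fS: "finite S" using S by (auto intro: finite_subset)
    have Sx: "\<forall>x\<in>S. 2 \<le> x \<and> x < j" using S by auto
    have pw: "is_perm_word n (hw n j S)"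
      unfolding is_perm_word_def hw_def using Sx fS j n by auto
    have P: "sorted_wrt (<) (sorted_list_of_set S @ [j, n])"
      using Sx fS j n by (auto simp: sorted_wrt_append)
    have Q: "sorted_wrt (<) (1 # sorted_list_of_set ?R)"
      by auto
    have D: "descs (hw n j S) = {Suc (card S)}"
      unfolding hw_def using descs_append[OF P Q] n by simp
    have "distinct (hw n j S)" using pw by (simp add: is_perm_word_def)
    hence "ballot (hw n j S)" using D by (intro ballot_one[of _ "Suc (card S)"]) auto
    moreover have "des_count (hw n j S) = 1" using D by (simp add: des_count_descs)
    moreover have "has_factor3 (hw n j S) j n 1"
    proof -
      have "has_factor3 (L @ [j, n] @ 1 # R) j n 1" for L R
        unfolding has_factor3_def by (intro exI[of _ "length L"]) (simp add: nth_append)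
      thus ?thesis unfolding hw_def .
    qed
    ultimately show ?thesis using pw by simp
  qed
  have sur: "ws \<in> hw n j ` Pow {2..<j}" if ws: "ws \<in> ?W" for ws
  proof -
    from ws obtain t where t: "Suc (Suc t) < length ws" "ws ! t = j" "ws ! Suc t = n" "ws ! Suc (Suc t) = 1"
      and pw: "is_perm_word n ws" and dc: "des_count ws = 1"
      unfolding has_factor3_def by auto
    have dist: "distinct ws" and st: "set ws = {1..n}" using pw by (auto simp: is_perm_word_def)
    have D: "descs ws = {Suc t}" using factor_descs[OF dc t(1)] t n by simp
    have s1: "sorted_wrt (<) (take (Suc (Suc t)) ws)" using sorted_parts(1)[OF dist] D by simp
    have s2: "sorted_wrt (<) (drop (Suc (Suc t)) ws)" using sorted_parts(2)[OF dist] D by simp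
    define A where "A = take t ws"
    define B where "B = drop (Suc (Suc (Suc t))) ws"
    have "ws = take t ws @ [ws ! t, ws ! Suc t, ws ! Suc (Suc t)] @ drop (Suc (Suc (Suc t))) ws"
      by (rule split3[OF t(1)])
    also have "\<dots> = A @ [j, n] @ 1 # B" by (simp add: t A_def B_def)
    finally have ws_eq: "ws = A @ [j, n] @ 1 # B" .
    have lA: "length A = t" using t(1) by (simp add: A_def)
    have tk: "take (Suc (Suc t)) ws = A @ [j, n]"
      using lA by (subst ws_eq) simp
    have dr: "drop (Suc (Suc t)) ws = 1 # B"
      using lA by (subst ws_eq) simp
    have sA: "sorted_wrt (<) A" and Aj: "\<forall>x\<in>set A. x < j" using s1 tk by (auto simp: sorted_wrt_append)
    have sB: "sorted_wrt (<) B" using s2 dr by simp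
    have d2: "distinct (A @ [j, n] @ 1 # B)" using dist ws_eq by simp
    have st2: "set A \<union> {j, n, 1} \<union> set B = {1..n}" using st ws_eq by auto
    have SA: "set A \<subseteq> {2..<j}"
    proof
      fix x assume x: "x \<in> set A"
      hence "x \<noteq> 1" using d2 by auto
      moreover have "x \<ge> 1" using x st2 by auto
      ultimately show "x \<in> {2..<j}" using Aj x by auto
    qed
    have dB: "set B \<inter> set A = {}" "j \<notin> set B" "n \<notin> set B" "1 \<notin> set B" "1 \<notin> set A"
      using d2 by auto
    have "set B = {1..n} - set A - {j, n, 1}" using st2 dB(1-4) by blast
    also have "\<dots> = {2..<n} - insert j (set A)" using dB(5) by auto
    finally have setB: "set B = {2..<n} - insert j (set A)" .
    have "sorted_list_of_set ({2..<n} - insert j (set A)) = B" using strict_sl[OF sB] setB by simp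
    hence "hw n j (set A) = A @ [j, n] @ 1 # B" unfolding hw_def using strict_sl[OF sA] by simp
    hence "ws = hw n j (set A)" using ws_eq by simp
    thus ?thesis using SA by blast
  qed
  have "?W = hw n j ` Pow {2..<j}" using mem sur by blast
  hence "b_count n 1 j 1 = card (hw n j ` Pow {2..<j})" by (simp add: b_count_def)
  also have "\<dots> = card (Pow {2..<j})" using inj by (rule card_image)
  also have "\<dots> = 2 ^ (j - 2)" by (simp add: card_Pow)
  finally show ?thesis .
qed



lemma funpow_in:
  assumes "\<pi> permutes {1..n}" "x \<in> {1..n}"
  shows "(\<pi> ^^ k) x \<in> {1..n}"
proof (induction k)
  case 0 thus ?case using assms by simp
next
  case (Suc k)
  hence "\<pi> ((\<pi> ^^ k) x) \<in> {1..n}" using permutes_in_image[OF assms(1)] by blast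
  thus ?case by simp
qed

lemma cyc_sub: "\<pi> permutes {1..n} \<Longrightarrow> x \<in> {1..n} \<Longrightarrow> cycle_of \<pi> x \<subseteq> {1..n}"
proof
  fix y assume "\<pi> permutes {1..n}" "x \<in> {1..n}" "y \<in> cycle_of \<pi> x"
  then obtain k where "y = (\<pi> ^^ k) x" unfolding cycle_of_def by blast
  thus "y \<in> {1..n}" using funpow_in[OF \<open>\<pi> permutes _\<close> \<open>x \<in> _\<close>] by simp
qed

lemma cyc_fin: "\<pi> permutes {1..n} \<Longrightarrow> x \<in> {1..n} \<Longrightarrow> finite (cycle_of \<pi> x)"
  by (rule finite_subset[OF cyc_sub]) auto

lemma cyc_self: "x \<in> cycle_of \<pi> x"
  unfolding cycle_of_def by (auto intro: exI[of _ 0])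

lemma cyc_step: "c \<in> cycle_of \<pi> x \<Longrightarrow> \<pi> c \<in> cycle_of \<pi> x"
proof -
  assume "c \<in> cycle_of \<pi> x"
  then obtain k where "c = (\<pi> ^^ k) x" unfolding cycle_of_def by blast
  hence "\<pi> c = (\<pi> ^^ Suc k) x" by simp
  thus ?thesis unfolding cycle_of_def by blast
qed

lemma cyc_image:
  assumes "\<pi> permutes {1..n}" "x \<in> {1..n}"
  shows "\<pi> ` cycle_of \<pi> x = cycle_of \<pi> x"
  by (rule endo_inj_surj) (use assms cyc_fin cyc_step permutes_inj_on in auto)

lemma cyc_fix: "\<pi> x = x \<Longrightarrow> cycle_of \<pi> x = {x}"
proof -
  assume h: "\<pi> x = x"
  have "(\<pi> ^^ k) x = x" for k by (induction k) (use h in auto)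
  thus ?thesis unfolding cycle_of_def by auto
qed

lemma funpow_fix_inj:
  assumes "inj \<pi>" "(\<pi> ^^ Suc k) x = (\<pi> ^^ k) x"
  shows "\<pi> x = x"
  using assms(2)
proof (induction k)
  case 0 thus ?case by simp
next
  case (Suc k)
  have "\<pi> ((\<pi> ^^ Suc k) x) = \<pi> ((\<pi> ^^ k) x)" using Suc.prems by simp
  hence "(\<pi> ^^ Suc k) x = (\<pi> ^^ k) x" using assms(1) by (simp add: inj_eq)
  thus ?case by (rule Suc.IH)
qed

lemma weight_pos:
  assumes p: "\<pi> permutes {1..n}" and x: "x \<in> {1..n}" and nx: "\<pi> x \<noteq> x"
  shows "cdes \<pi> (cycle_of \<pi> x) \<ge> 1 \<and> casc \<pi> (cycle_of \<pi> x) \<ge> 1"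
proof -
  let ?C = "cycle_of \<pi> x"
  have fC: "finite ?C" using cyc_fin[OF p x] .
  have inj: "inj_on \<pi> ?C" using p permutes_inj_on by blast
  have eq: "sum \<pi> ?C = sum id ?C"
  proof -
    have "sum id (\<pi> ` ?C) = sum (id \<circ> \<pi>) ?C" by (rule sum.reindex[OF inj])
    thus ?thesis using cyc_image[OF p x] by simp
  qed
  have xC: "x \<in> ?C" by (rule cyc_self)
  have "casc \<pi> ?C \<ge> 1"
  proof (rule ccontr)
    assume "\<not> ?thesis"
    hence "card {c \<in> ?C. c < \<pi> c} = 0" by (simp add: casc_def)
    hence "{c \<in> ?C. c < \<pi> c} = {}" using fC by simp
    hence le: "\<forall>c\<in>?C. \<pi> c \<le> c" by auto
    hence "\<pi> x < x" using xC nx by force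
    hence "sum \<pi> ?C < sum id ?C" using fC le xC by (intro sum_strict_mono_ex1) auto
    thus False using eq by simp
  qed
  moreover have "cdes \<pi> ?C \<ge> 1"
  proof (rule ccontr)
    assume "\<not> ?thesis"
    hence "card {c \<in> ?C. c > \<pi> c} = 0" by (simp add: cdes_def)
    hence "{c \<in> ?C. c > \<pi> c} = {}" using fC by simp
    hence le: "\<forall>c\<in>?C. c \<le> \<pi> c" by auto
    hence "x < \<pi> x" using xC nx by force
    hence "sum id ?C < sum \<pi> ?C" using fC le xC by (intro sum_strict_mono_ex1) auto
    thus False using eq by simp
  qed
  ultimately show ?thesis by simp
qed

lemma key_max:
  fixes f :: "nat \<Rightarrow> nat"
  assumes fin: "finite C" and a: "a \<in> C" "\<forall>c\<in>C. a \<le> c" and im: "f ` C \<subseteq> C"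
    and inj: "inj_on f C" and dec: "\<forall>c\<in>C. c \<noteq> a \<longrightarrow> f c < c"
    and x: "x \<in> C" "x \<noteq> a"
  shows "f x = Max {y \<in> C. y < x}"
proof -
  define D where "D = {y \<in> C. a < y \<and> y \<le> x}"
  define E where "E = {y \<in> C. y < x}"
  have fD: "finite D" "finite E" using fin by (auto simp: D_def E_def)
  have sub: "f ` D \<subseteq> E"
  proof
    fix z assume "z \<in> f ` D"
    then obtain y where y: "y \<in> D" "z = f y" by auto
    hence "f y < y" "y \<le> x" "y \<in> C" using dec by (auto simp: D_def)
    thus "z \<in> E" using y im by (auto simp: E_def)
  qed
  have ax: "a < x" using a x by (metis le_neq_implies_less)
  have "insert a D = insert x E" using a x ax by (auto simp: D_def E_def)
  moreover have "a \<notin> D" "x \<notin> E" by (auto simp: D_def E_def)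
  ultimately have "card D = card E" using fD by (metis card_insert_disjoint diff_Suc_1)
  moreover have "card (f ` D) = card D" using inj by (intro card_image) (auto simp: D_def intro: inj_on_subset)
  ultimately have fDE: "f ` D = E" using sub fD by (metis card_subset_eq)
  have aE: "a \<in> E" using a ax by (auto simp: E_def)
  define m where "m = Max E"
  have mE: "m \<in> E" unfolding m_def by (rule Max_in) (use aE fD in auto)
  then obtain y where y: "y \<in> D" "f y = m" using fDE by (metis imageE)
  have "y = x"
  proof (rule ccontr)
    assume "y \<noteq> x"
    hence "y \<in> E" using y by (auto simp: D_def E_def)
    hence "y \<le> m" using fD by (simp add: m_def)
    moreover have "f y < y" using dec y by (auto simp: D_def)
    ultimately show False using y by simp
  qed
  thus ?thesis using y by (simp add: m_def E_def)
qed



lemma sigma_props: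
  fixes C :: "nat set"
  assumes fin: "finite C" and Cs: "C \<subseteq> {1..n}" and c1: "1 \<in> C" and cn: "n \<in> C" and n1: "n \<noteq> 1"
  defines "L \<equiv> rev (sorted_list_of_set C)"
  shows "cycle_of_list L permutes C" "cycle_of_list L 1 = n"
    "\<forall>c\<in>C. c \<noteq> 1 \<longrightarrow> cycle_of_list L c < c"
    "\<forall>x\<in>C. cycle_of (cycle_of_list L) x = C"
proof -
  let ?s = "cycle_of_list L"
  have dL: "distinct L" and sL: "set L = C" using fin by (auto simp: L_def)
  have sw: "sorted_wrt (>) L" unfolding L_def sorted_wrt_rev using strict_sorted_list_of_set by simp
  define l where "l = length L"
  have lc: "l = card C" using fin by (simp add: l_def L_def)
  have l2: "l \<ge> 2"
  proof -
    have "{1, n} \<subseteq> C" using c1 cn by auto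
    hence "card {1, n} \<le> card C" using card_mono[OF fin] by blast
    thus ?thesis using n1 lc by simp
  qed
  have dec: "L ! j < L ! i" if "i < j" "j < l" for i j
    using sorted_wrt_nth_less[OF sw that(1)] that(2) by (simp add: l_def)
  have rot: "(?s ^^ k) (L ! i) = L ! ((k + i) mod l)" if "i < l" for i k
  proof -
    have "map (?s ^^ k) L ! i = rotate k L ! i" using cyclic_rotation[OF dL, of k] by simp
    thus ?thesis using that by (simp add: nth_rotate l_def)
  qed
  have inC: "L ! i \<in> C" if "i < l" for i using that sL by (auto simp: l_def)
  have ex: "\<exists>i<l. L ! i = c" if "c \<in> C" for c using that sL by (auto simp: l_def in_set_conv_nth)
  obtain i1 where i1: "i1 < l" "L ! i1 = 1" using ex[OF c1] by blast
  obtain i0 where i0: "i0 < l" "L ! i0 = n" using ex[OF cn] by blast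
  have last1: "L ! (l - 1) = 1"
  proof -
    have "L ! (l - 1) \<le> L ! i1" using i1 dec[of i1 "l - 1"] by (cases "i1 = l - 1") auto
    moreover have "L ! (l - 1) \<ge> 1" using inC[of "l - 1"] Cs l2 by force
    ultimately show ?thesis using i1 by simp
  qed
  have first: "L ! 0 = n"
  proof -
    have "L ! 0 \<ge> L ! i0" using i0 dec[of 0 i0] by (cases "i0 = 0") auto
    moreover have "L ! 0 \<le> n" using inC[of 0] Cs l2 by force
    ultimately show ?thesis using i0 by simp
  qed
  show "?s permutes C" using cycle_permutes[of L] sL by simp
  have "?s 1 = ?s (L ! (l - 1))" using last1 by simp
  also have "\<dots> = (?s ^^ 1) (L ! (l - 1))" by simp
  also have "\<dots> = L ! ((1 + (l - 1)) mod l)" using l2 by (intro rot) auto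
  also have "\<dots> = L ! 0" using l2 by simp
  finally show "?s 1 = n" using first by simp
  show "\<forall>c\<in>C. c \<noteq> 1 \<longrightarrow> ?s c < c"
  proof (intro ballI impI)
    fix c assume c: "c \<in> C" "c \<noteq> 1"
    then obtain i where i: "i < l" "L ! i = c" using ex by blast
    have "i \<noteq> l - 1" using i c last1 by auto
    hence il: "Suc i < l" using i by simp
    have "?s c = (?s ^^ 1) (L ! i)" using i by simp
    also have "\<dots> = L ! ((1 + i) mod l)" using i by (intro rot) auto
    also have "\<dots> = L ! Suc i" using il by simp
    also have "\<dots> < L ! i" using il by (intro dec) auto
    finally show "?s c < c" using i by simp
  qed
  show "\<forall>x\<in>C. cycle_of ?s x = C"
  proof (intro ballI)
    fix x assume "x \<in> C"
    then obtain i where i: "i < l" "L ! i = x" using ex by blast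
    show "cycle_of ?s x = C"
    proof
      show "cycle_of ?s x \<subseteq> C"
      proof
        fix y assume "y \<in> cycle_of ?s x"
        then obtain k where "y = (?s ^^ k) x" unfolding cycle_of_def by blast
        hence "y = L ! ((k + i) mod l)" using rot[OF i(1), of k] i(2) by simp
        thus "y \<in> C" using inC l2 by simp
      qed
      show "C \<subseteq> cycle_of ?s x"
      proof
        fix y assume "y \<in> C"
        then obtain m where m: "m < l" "L ! m = y" using ex by blast
        have "(?s ^^ (m + l - i)) x = L ! ((m + l - i + i) mod l)" using rot[OF i(1), of "m + l - i"] i(2) by simp
        also have "(m + l - i + i) mod l = m" using i m by simp
        finally have "(?s ^^ (m + l - i)) x = y" using m by simp
        thus "y \<in> cycle_of ?s x" unfolding cycle_of_def by blast
      qed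
    qed
  qed
qed



definition gS :: "nat \<Rightarrow> nat \<Rightarrow> nat set \<Rightarrow> nat \<Rightarrow> nat" where
  "gS n j S = cycle_of_list (rev (sorted_list_of_set ({1, n, j} \<union> S)))"

lemma sum_two:
  fixes f :: "'a \<Rightarrow> nat"
  assumes "finite A" "a \<in> A" "b \<in> A" "a \<noteq> b"
  shows "f a + f b \<le> sum f A"
proof -
  have "sum f {a, b} \<le> sum f A" using assms by (intro sum_mono2) auto
  thus ?thesis using assms(4) by simp
qed

lemma cw_ge:
  assumes p: "\<pi> permutes {1..n}" and x: "x \<in> {1..n}"
  shows "min (cdes \<pi> (cycle_of \<pi> x)) (casc \<pi> (cycle_of \<pi> x)) \<le> cyclic_weight n \<pi>"
  unfolding cyclic_weight_def cycles_of_def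
  by (rule member_le_sum) (use x in auto)

lemma p_count_zero:
  assumes "n \<ge> 2"
  shows "p_count n 0 1 j = 0"
proof -
  have E: "{\<pi>. \<pi> permutes {1..n} \<and> odd_order n \<pi> \<and> cyclic_weight n \<pi> = 0 \<and> \<pi> 1 = n \<and> \<pi> n = j} = {}"
  proof (rule ccontr)
    assume "\<not> ?thesis"
    then obtain \<pi> where p: "\<pi> permutes {1..n}" "cyclic_weight n \<pi> = 0" "\<pi> 1 = n" by auto
    have x: "(1::nat) \<in> {1..n}" using assms by auto
    have "min (cdes \<pi> (cycle_of \<pi> 1)) (casc \<pi> (cycle_of \<pi> 1)) \<ge> 1"
      using weight_pos[OF p(1) x] p(3) assms by (simp add: min_def)
    thus False using cw_ge[OF p(1) x] p(2) by linarith
  qed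
  show ?thesis unfolding p_count_def E by simp
qed



lemma gS_facts:
  assumes n: "n \<ge> 3" and j: "2 \<le> j" "j \<le> n - 1" and S: "S \<subseteq> {2..<j}"
  defines "C \<equiv> {1, n, j} \<union> S"
  shows "gS n j S permutes C" "gS n j S 1 = n" "gS n j S n = j"
    "\<forall>c\<in>C. c \<noteq> 1 \<longrightarrow> gS n j S c < c"
    "\<forall>x\<in>C. cycle_of (gS n j S) x = C" "\<forall>x. x \<notin> C \<longrightarrow> gS n j S x = x"
proof -
  have Sx: "\<forall>x\<in>S. 2 \<le> x \<and> x < j" using S by auto
  have fin: "finite C" unfolding C_def using S by (auto intro: finite_subset)
  have Cs: "C \<subseteq> {1..n}" unfolding C_def using Sx j n by auto
  have c1: "1 \<in> C" and cn: "n \<in> C" and cj: "j \<in> C" unfolding C_def by auto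
  have n1: "n \<noteq> 1" using n by simp
  note sp = sigma_props[OF fin Cs c1 cn n1]
  have gs: "gS n j S = cycle_of_list (rev (sorted_list_of_set C))" by (simp add: gS_def C_def)
  show p: "gS n j S permutes C" using sp(1) gs by simp
  show "gS n j S 1 = n" using sp(2) gs by simp
  show dec: "\<forall>c\<in>C. c \<noteq> 1 \<longrightarrow> gS n j S c < c" using sp(3) gs by simp
  show "\<forall>x\<in>C. cycle_of (gS n j S) x = C" using sp(4) gs by simp
  show "\<forall>x. x \<notin> C \<longrightarrow> gS n j S x = x" using permutes_not_in[OF p] by simp
  have "gS n j S n = Max {y \<in> C. y < n}"
  proof (rule key_max[OF fin c1, where f = "gS n j S" and x = n])
    show "\<forall>c\<in>C. 1 \<le> c" using Cs by auto
    show "gS n j S ` C \<subseteq> C" using permutes_image[OF p] by simp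
    show "inj_on (gS n j S) C" using permutes_inj_on[OF p] .
    show "\<forall>c\<in>C. c \<noteq> 1 \<longrightarrow> gS n j S c < c" by (rule dec)
    show "n \<in> C" "n \<noteq> 1" using cn n1 .
  qed
  also have "Max {y \<in> C. y < n} = j"
  proof (rule Max_eqI)
    show "finite {y \<in> C. y < n}" using fin by simp
    show "j \<in> {y \<in> C. y < n}" using cj j n by auto
    fix y assume "y \<in> {y \<in> C. y < n}"
    thus "y \<le> j" unfolding C_def using Sx j by auto
  qed
  finally show "gS n j S n = j" .
qed



lemma card3: "(1::nat) < j \<Longrightarrow> j < n \<Longrightarrow> S \<subseteq> {2..<j} \<Longrightarrow> card ({1, n, j} \<union> S) = 3 + card S"
proof -
  assume a: "(1::nat) < j" "j < n" "S \<subseteq> {2..<j}"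
  have fS: "finite S" using a(3) by (auto intro: finite_subset)
  have "{1, n, j} \<inter> S = {}" using a by auto
  hence "card ({1, n, j} \<union> S) = card {1, n, j} + card S" using fS by (intro card_Un_disjoint) auto
  moreover have "card {1, n, j} = 3" using a by auto
  ultimately show ?thesis by simp
qed

lemma gS_mem:
  assumes n: "n \<ge> 3" and j: "2 \<le> j" "j \<le> n - 1" and S: "S \<subseteq> {2..<j}" and ev: "even (card S)"
  shows "gS n j S permutes {1..n} \<and> odd_order n (gS n j S) \<and> cyclic_weight n (gS n j S) = 1
         \<and> gS n j S 1 = n \<and> gS n j S n = j"
proof -
  define C where "C = {1, n, j} \<union> S"
  define \<sigma> where "\<sigma> = gS n j S"
  note gf = gS_facts[OF n j S, folded C_def \<sigma>_def]
  have Sx: "\<forall>x\<in>S. 2 \<le> x \<and> x < j" using S by auto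
  have fin: "finite C" unfolding C_def using S by (auto intro: finite_subset)
  have Cs: "C \<subseteq> {1..n}" unfolding C_def using Sx j n by auto
  have c1: "1 \<in> C" and cn: "n \<in> C" unfolding C_def by auto
  have p: "\<sigma> permutes {1..n}" using permutes_subset[OF gf(1) Cs] .
  have cyc: "D = C \<or> (\<exists>x. D = {x} \<and> \<sigma> x = x \<and> x \<notin> C)" if D: "D \<in> cycles_of n \<sigma>" for D
  proof -
    obtain x where x: "x \<in> {1..n}" "D = cycle_of \<sigma> x" using D unfolding cycles_of_def by auto
    show ?thesis
    proof (cases "x \<in> C")
      case True thus ?thesis using gf(5) x by simp
    next
      case False
      hence "\<sigma> x = x" using gf(6) by simp
      thus ?thesis using cyc_fix[of \<sigma> x] x False by auto
    qed
  qed
  have cardC: "card C = 3 + card S" unfolding C_def using j n S by (intro card3) auto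
  have "odd_order n \<sigma>" unfolding odd_order_def
  proof
    fix D assume "D \<in> cycles_of n \<sigma>"
    thus "odd (card D)" using cyc cardC ev by fastforce
  qed
  moreover have "cyclic_weight n \<sigma> = 1"
  proof -
    have wC: "min (cdes \<sigma> C) (casc \<sigma> C) = 1"
    proof -
      have "{c \<in> C. c < \<sigma> c} = {1}" using gf(2) gf(4) c1 n by force
      hence "casc \<sigma> C = 1" by (simp add: casc_def)
      moreover have "cdes \<sigma> C \<ge> 1"
      proof -
        have "n \<in> {c \<in> C. c > \<sigma> c}" using cn gf(3) j n by auto
        moreover have "finite {c \<in> C. c > \<sigma> c}" using fin by simp
        ultimately have "card {c \<in> C. c > \<sigma> c} > 0" by (subst card_gt_0_iff) blast
        thus ?thesis by (simp add: cdes_def)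
      qed
      ultimately show ?thesis by simp
    qed
    have w: "min (cdes \<sigma> D) (casc \<sigma> D) = (if D = C then 1 else 0)" if D: "D \<in> cycles_of n \<sigma>" for D
    proof (cases "D = C")
      case True thus ?thesis using wC by simp
    next
      case False
      then obtain x where "D = {x}" "\<sigma> x = x" using cyc[OF D] by auto
      hence "cdes \<sigma> D = 0" by (simp add: cdes_def)
      thus ?thesis using False by simp
    qed
    have Cin: "C \<in> cycles_of n \<sigma>"
    proof -
      have "C = cycle_of \<sigma> 1" using gf(5) c1 by simp
      moreover have "(1::nat) \<in> {1..n}" using n by simp
      ultimately show ?thesis unfolding cycles_of_def by blast
    qed
    have "cyclic_weight n \<sigma> = (\<Sum>D\<in>cycles_of n \<sigma>. if D = C then 1 else 0)"
      unfolding cyclic_weight_def by (rule sum.cong) (use w in auto)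
    also have "\<dots> = 1" using Cin by (simp add: cycles_of_def)
    finally show ?thesis .
  qed
  ultimately show ?thesis using p gf(2) gf(3) by (simp add: \<sigma>_def)
qed



lemma gS_sur:
  assumes n: "n \<ge> 3" and j: "2 \<le> j" "j \<le> n - 1"
    and p: "\<pi> permutes {1..n}" and oo: "odd_order n \<pi>" and cw: "cyclic_weight n \<pi> = 1"
    and p1: "\<pi> 1 = n" and pn: "\<pi> n = j"
  shows "\<exists>S. S \<subseteq> {2..<j} \<and> even (card S) \<and> \<pi> = gS n j S"
proof -
  define C where "C = cycle_of \<pi> 1"
  have x1: "(1::nat) \<in> {1..n}" using n by simp
  have fC: "finite C" using cyc_fin[OF p x1] by (simp add: C_def)
  have Cs: "C \<subseteq> {1..n}" using cyc_sub[OF p x1] by (simp add: C_def)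
  have imC: "\<pi> ` C = C" using cyc_image[OF p x1] by (simp add: C_def)
  have c1: "1 \<in> C" using cyc_self by (simp add: C_def)
  have cn: "n \<in> C" using cyc_step[OF c1[unfolded C_def]] p1 by (simp add: C_def)
  have cj: "j \<in> C" using cyc_step[OF cn[unfolded C_def]] pn by (simp add: C_def)
  have injp: "inj \<pi>" using p by (rule permutes_inj)
  have CC: "C \<in> cycles_of n \<pi>" unfolding cycles_of_def C_def using x1 by blast
  have wC1: "min (cdes \<pi> C) (casc \<pi> C) \<ge> 1" using weight_pos[OF p x1] p1 n by (simp add: C_def)
  have "min (cdes \<pi> C) (casc \<pi> C) \<le> 1" using cw_ge[OF p x1] cw by (simp add: C_def)
  hence wC: "min (cdes \<pi> C) (casc \<pi> C) = 1" using wC1 by linarith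
  have only: "x \<in> C" if x: "x \<in> {1..n}" "\<pi> x \<noteq> x" for x
  proof (rule ccontr)
    assume nx: "x \<notin> C"
    have "cycle_of \<pi> x \<noteq> C" using cyc_self[of x \<pi>] nx by auto
    moreover have "cycle_of \<pi> x \<in> cycles_of n \<pi>" unfolding cycles_of_def using x by blast
    moreover have "finite (cycles_of n \<pi>)" by (simp add: cycles_of_def)
    ultimately have "min (cdes \<pi> C) (casc \<pi> C) + min (cdes \<pi> (cycle_of \<pi> x)) (casc \<pi> (cycle_of \<pi> x))
        \<le> cyclic_weight n \<pi>" unfolding cyclic_weight_def using CC
      by (intro sum_two[where f = "\<lambda>D. min (cdes \<pi> D) (casc \<pi> D)"]) auto
    moreover have "min (cdes \<pi> (cycle_of \<pi> x)) (casc \<pi> (cycle_of \<pi> x)) \<ge> 1"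
      using weight_pos[OF p x] by simp
    ultimately show False using wC cw by linarith
  qed
  have fixout: "\<pi> x = x" if "x \<notin> C" for x
  proof (cases "x \<in> {1..n}")
    case True thus ?thesis using only that by blast
  next
    case False thus ?thesis using permutes_not_in[OF p] by blast
  qed
  obtain y where y: "y \<in> C" "\<pi> y = 1" using imC c1 by (metis imageE)
  have yn: "y \<noteq> n" using y pn j by auto
  have y1: "y \<noteq> 1" using y p1 n by auto
  have "y \<ge> 1" using y Cs by auto
  hence "y > 1" using y1 by simp
  have "{n, y} \<subseteq> {c \<in> C. c > \<pi> c}" using cn y pn j n \<open>y > 1\<close> by auto
  hence "card {n, y} \<le> cdes \<pi> C" unfolding cdes_def using fC by (intro card_mono) auto
  hence "cdes \<pi> C \<ge> 2" using yn by simp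
  hence "casc \<pi> C = 1" using wC by (simp add: min_def split: if_splits)
  hence "card {c \<in> C. c < \<pi> c} = 1" by (simp add: casc_def)
  moreover have "1 \<in> {c \<in> C. c < \<pi> c}" using c1 p1 n by auto
  ultimately have A1: "{c \<in> C. c < \<pi> c} = {1}" by (metis card_1_singletonE singletonD)
  have dec: "\<forall>c\<in>C. c \<noteq> 1 \<longrightarrow> \<pi> c < c"
  proof (intro ballI impI)
    fix c assume c: "c \<in> C" "c \<noteq> 1"
    hence "\<not> c < \<pi> c" using A1 by blast
    moreover have "\<pi> c \<noteq> c"
    proof
      assume pc: "\<pi> c = c"
      obtain k where "c = (\<pi> ^^ k) 1" using c(1) unfolding C_def cycle_of_def by blast
      hence "(\<pi> ^^ Suc k) 1 = (\<pi> ^^ k) 1" using pc by simp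
      hence "\<pi> 1 = 1" by (rule funpow_fix_inj[OF injp])
      thus False using p1 n by simp
    qed
    ultimately show "\<pi> c < c" by simp
  qed
  have Cge: "\<forall>c\<in>C. 1 \<le> c" using Cs by auto
  have injC: "inj_on \<pi> C" using injp by (metis inj_on_subset subset_UNIV)
  have K: "\<pi> x = Max {y \<in> C. y < x}" if "x \<in> C" "x \<noteq> 1" for x
    by (rule key_max[OF fC c1 Cge _ injC dec that]) (use imC in simp)
  define S where "S = C - {1, n, j}"
  have S: "S \<subseteq> {2..<j}"
  proof
    fix c assume c: "c \<in> S"
    hence cC: "c \<in> C" "c \<noteq> 1" "c \<noteq> n" "c \<noteq> j" by (auto simp: S_def)
    hence "c \<le> n" "c \<ge> 1" using Cs by auto
    hence "c \<in> {y \<in> C. y < n}" using cC by auto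
    hence "c \<le> Max {y \<in> C. y < n}" using fC by simp
    also have "\<dots> = j" using K[OF cn] pn n by simp
    finally show "c \<in> {2..<j}" using cC \<open>c \<ge> 1\<close> by auto
  qed
  have CS: "C = {1, n, j} \<union> S" using c1 cn cj by (auto simp: S_def)
  have "odd (card C)" using oo CC by (simp add: odd_order_def)
  moreover have "card C = 3 + card S" unfolding CS using j n S by (intro card3) auto
  ultimately have ev: "even (card S)" by simp
  define \<sigma> where "\<sigma> = gS n j S"
  note gf = gS_facts[OF n j S, folded CS \<sigma>_def]
  have "\<pi> = \<sigma>"
  proof
    fix x
    show "\<pi> x = \<sigma> x"
    proof (cases "x \<in> C")
      case False thus ?thesis using fixout gf(6) by simp
    next
      case True
      show ?thesis
      proof (cases "x = 1")
        case True thus ?thesis using p1 gf(2) by simp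
      next
        case False
        have "\<sigma> x = Max {y \<in> C. y < x}"
          by (rule key_max[OF fC c1 Cge _ _ gf(4) \<open>x \<in> C\<close> False])
             (use permutes_image[OF gf(1)] permutes_inj_on[OF gf(1)] in auto)
        thus ?thesis using K[OF \<open>x \<in> C\<close> False] by simp
      qed
    qed
  qed
  thus ?thesis using S ev by (auto simp: \<sigma>_def)
qed



lemma gS_moved:
  assumes n: "n \<ge> 3" and j: "2 \<le> j" "j \<le> n - 1" and S: "S \<subseteq> {2..<j}"
  shows "{x. gS n j S x \<noteq> x} = {1, n, j} \<union> S"
proof -
  note gf = gS_facts[OF n j S]
  show ?thesis
  proof (intro set_eqI iffI)
    fix x assume "x \<in> {x. gS n j S x \<noteq> x}"
    thus "x \<in> {1, n, j} \<union> S" using gf(6) by blast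
  next
    fix x assume x: "x \<in> {1, n, j} \<union> S"
    show "x \<in> {x. gS n j S x \<noteq> x}"
    proof (cases "x = 1")
      case True thus ?thesis using gf(2) n by simp
    next
      case False thus ?thesis using gf(4) x by fastforce
    qed
  qed
qed

lemma gS_inj:
  assumes n: "n \<ge> 3" and j: "2 \<le> j" "j \<le> n - 1"
  shows "inj_on (gS n j) {S. S \<subseteq> {2..<j} \<and> even (card S)}"
proof (rule inj_onI)
  fix S1 S2 assume S1: "S1 \<in> {S. S \<subseteq> {2..<j} \<and> even (card S)}" and S2: "S2 \<in> {S. S \<subseteq> {2..<j} \<and> even (card S)}"
    and e: "gS n j S1 = gS n j S2"
  have "{1, n, j} \<union> S1 = {1, n, j} \<union> S2"
    using gS_moved[OF n j, of S1] gS_moved[OF n j, of S2] S1 S2 e by simp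
  moreover have "{1, n, j} \<inter> S1 = {}" "{1, n, j} \<inter> S2 = {}" using S1 S2 j n by auto
  ultimately show "S1 = S2" by blast
qed

lemma p_count_one:
  assumes n: "n \<ge> 3" and j: "2 \<le> j" "j \<le> n - 1"
  shows "p_count n 1 1 j = card {S. S \<subseteq> {2..<j} \<and> even (card S)}"
proof -
  let ?E = "{S. S \<subseteq> {2..<j} \<and> even (card S)}"
  have E: "{\<pi>. \<pi> permutes {1..n} \<and> odd_order n \<pi> \<and> cyclic_weight n \<pi> = 1 \<and> \<pi> 1 = n \<and> \<pi> n = j}
      = gS n j ` ?E"
  proof (intro set_eqI iffI)
    fix \<pi> assume "\<pi> \<in> {\<pi>. \<pi> permutes {1..n} \<and> odd_order n \<pi> \<and> cyclic_weight n \<pi> = 1 \<and> \<pi> 1 = n \<and> \<pi> n = j}"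
    hence h: "\<pi> permutes {1..n}" "odd_order n \<pi>" "cyclic_weight n \<pi> = 1" "\<pi> 1 = n" "\<pi> n = j" by auto
    from gS_sur[OF n j h] show "\<pi> \<in> gS n j ` ?E" by blast
  next
    fix \<pi> assume "\<pi> \<in> gS n j ` ?E"
    then obtain S where "S \<subseteq> {2..<j}" "even (card S)" "\<pi> = gS n j S" by blast
    thus "\<pi> \<in> {\<pi>. \<pi> permutes {1..n} \<and> odd_order n \<pi> \<and> cyclic_weight n \<pi> = 1 \<and> \<pi> 1 = n \<and> \<pi> n = j}"
      using gS_mem[OF n j] by blast
  qed
  show ?thesis unfolding p_count_def E using card_image[OF gS_inj[OF n j]] .
qed

lemma even_count:
  fixes A :: "'a set"
  assumes fin: "finite A" and a: "a \<in> A"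
  shows "2 * card {S. S \<subseteq> A \<and> even (card S)} = 2 ^ card A"
proof -
  define Ev where "Ev = {S. S \<subseteq> A \<and> even (card S)}"
  define Od where "Od = {S. S \<subseteq> A \<and> odd (card S)}"
  define t where "t = (\<lambda>S. if a \<in> S then S - {a} else insert a S)"
  have tt: "t (t S) = S" for S by (auto simp: t_def)
  have tsub: "t S \<subseteq> A" if "S \<subseteq> A" for S using that a by (auto simp: t_def)
  have tpar: "even (card (t S)) \<longleftrightarrow> odd (card S)" if "S \<subseteq> A" for S
  proof -
    have fS: "finite S" using that fin by (auto intro: finite_subset)
    show ?thesis
    proof (cases "a \<in> S")
      case True
      hence "card (t S) = card S - 1" "card S \<ge> 1" using fS by (auto simp: t_def card_gt_0_iff Suc_le_eq)
      thus ?thesis by auto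
    next
      case False
      hence "card (t S) = Suc (card S)" using fS by (simp add: t_def)
      thus ?thesis by simp
    qed
  qed
  have "bij_betw t Ev Od"
    by (rule bij_betw_byWitness[where f' = t]) (use tt tsub tpar in \<open>auto simp: Ev_def Od_def\<close>)
  hence "card Ev = card Od" by (rule bij_betw_same_card)
  moreover have "Ev \<union> Od = Pow A" by (auto simp: Ev_def Od_def)
  moreover have "Ev \<inter> Od = {}" by (auto simp: Ev_def Od_def)
  moreover have "finite Ev" "finite Od" using fin by (auto simp: Ev_def Od_def)
  ultimately have "card Ev + card Ev = card (Pow A)" by (metis card_Un_disjoint)
  thus ?thesis using fin by (simp add: card_Pow Ev_def)
qed

theorem proposition4p1:
  fixes n d j :: nat
  assumes "d \<in> {0, 1}" and "n \<ge> 3" and "2 \<le> j" and "j \<le> n - 1"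
  shows "b_count n d 1 j + b_count n d j 1 = 2 * p_count n d 1 j"
proof (cases "d = 0")
  case True
  have "b_count n 0 1 j = 0" using assms by (intro b_count_zero) auto
  moreover have "b_count n 0 j 1 = 0" using assms by (intro b_count_zero) auto
  moreover have "p_count n 0 1 j = 0" using assms by (intro p_count_zero) auto
  ultimately show ?thesis using True by simp
next
  case False
  hence d: "d = 1" using assms(1) by simp
  have b1: "b_count n 1 1 j = (if j = 2 then 1 else 0)" using b_count_1j assms(2-4) .
  have b2: "b_count n 1 j 1 = 2 ^ (j - 2)" using b_count_j1 assms(2-4) .
  have p: "p_count n 1 1 j = card {S. S \<subseteq> {2..<j} \<and> even (card S)}" using p_count_one assms(2-4) .
  show ?thesis
  proof (cases "j = 2")
    case True
    have "{S. S \<subseteq> {2..<j} \<and> even (card S)} = {{}}" using True by auto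
    thus ?thesis using d b1 b2 p True by simp
  next
    case False
    hence "2 * card {S. S \<subseteq> {2..<j} \<and> even (card S)} = 2 ^ card {2..<j}"
      using assms False by (intro even_count[of "{2..<j}" 2]) auto
    thus ?thesis using d b1 b2 p False by simp
  qed
qed


end
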